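(* Consider the algorithm described in the context, where $\psi$ can be truncated, and assume that the iterates are bounded (there is $R>0$ with $\{x^k\}\subseteq B_R(0)$). Let $\tilde x^k$ denote the point before the truncation step of iteration $k$ and $x^{k+1}$ the point after it. Then $$\sum_{k=0}^\infty\|x^{k+1}-\tilde x^k\|\le m\kappa\sum_{i=0}^\infty\epsilon_i<\infty\quad\text{and}\quad\sum_{k=0}^\infty|\psi(x^{k+1})-\psi(\tilde x^k)|<\infty.$$
   Context: Problem: minimize $\psi=f+\varphi$ where $f:\mathbb{R}^n\to\mathbb{R}$ is continuously differentiable and $\varphi:\mathbb{R}^n\to\mathbb{R}$ is convex. Notation: $\|\cdot\|$ Euclidean norm, $B_r(x)$ open ball, $\bar v=v/\|v\|$, $\psi'(x;d)$ directional derivative, $\partial\psi(x)=\nabla f(x)+\partial\varphi(x)$; $x$ is stationary if $0\in\partial\psi(x)$. Pseudo-gradient: $g(x)=u(x)d(x)$ where, for non-stationary $x$, $\|d(x)\|=1$, $\psi'(x;d(x))<0$, $u(x)\in[\psi'(x;d(x)),0)$, and for stationary $x$, $d(x)=0$, $u(x)=0$. Safeguards: for $\|d\|=1$, $\Gamma_{\max}(x,d)=\sup\{T>0: t\mapsto\psi(x+td)\text{ is } C^1\text{ on }(0,T)\}$, $\Gamma(x)=\inf_{\|d\|=1}\Gamma_{\max}(x,d)$; a stepsize safeguard $(x,d)\mapsto\Gamma(x,d)\in(0,\infty]$ is fixed. Truncation: $\psi$ can be truncated with data $\mathbb{R}^n=S_0\supset\cdots\supset S_m$, $\delta\in(0,\infty]$,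 $\kappa>0$, $T:\mathbb{R}^n\times(0,\delta]\to\mathbb{R}^n$ meaning (i) $\Gamma(x)\ge\delta$ on $S_m$; (ii) for $a\in(0,\delta]$, $x\in S_i\setminus S_{i+1}$, $i<m$: if $\Gamma(x)\ge a$ then $T(x,a)=x$, else $T(x,a)\in S_{i+1}$, $\Gamma(T(x,a))\ge a$, $\|T(x,a)-x\|\le\kappa a$. Put $S_{m+1}=\emptyset$. Algorithm: parameters $0<\eta<\eta_1<\eta_2<1$, $0<r_1<1<r_2$, $\Delta_{\max}>0$, $\gamma_1,\gamma_2>0$, a positive strictly decreasing summable sequence $(\epsilon_s)$ with $\epsilon_s\le\delta$, a nonincreasing $\ell:(0,\infty)\to[0,\frac12]$ with $\ell(\Delta)\to0$ as $\Delta\to0^+$; start $x^0$, $\Delta_0>0$, counters $c_0=\dots=c_m=0$. Iteration $k$: $g^k=g(x^k)$; stop if $g^k=0$. Choose $B^k\in\mathbb{R}^{n\times n}$, model $m_k(s)=\psi(x^k)+\langle g^k,s\rangle+\frac12\langle s,B^ks\rangle$, Cauchy point $s^k_C=-\alpha^C_kg^k$ with $\alpha^C_k\in\arg\min_{0\le t\le\Delta_k/\|g^k\|}m_k(-tg^k)$. Choose $s^k$, $\|s^k\|\le\Delta_k$, with $m_k(0)-m_k(s^k)\ge\frac{\gamma_1}{2}\|g^k\|\min\{\Delta_k,\gamma_2\|g^k\|\}$ and $m_k(0)-m_k(s^k)\ge(1-\ell(\|s^k\|))(m_k(0)-m_k(s^k_C))$. Let $\rho^1_k=\frac{\psi(x^k)-\psi(x^k+s^k)}{m_k(0)-m_k(s^k)}$.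 If $\rho^1_k\ge\eta_1$: $\tilde x^k=x^k+s^k$, $\Delta_{k+1}=\min\{\Delta_{\max},r_2\Delta_k\}$ if $\rho^1_k>\eta_2$ and $\Delta_{k+1}=\Delta_k$ otherwise. Otherwise: $\alpha_k=\min\{\Gamma(x^k,\bar s^k),\|s^k\|\}$; if $m_k(0)-m_k(\alpha_k\bar s^k)<\frac{\alpha_k}{2\|s^k\|}(m_k(0)-m_k(s^k))$, replace $s^k$ by $s^k_C$ and $\alpha_k=\min\{\Gamma(x^k,\bar s^k_C),\|s^k_C\|\}$; $\rho^2_k=\frac{\psi(x^k)-\psi(x^k+\alpha_k\bar s^k)}{m_k(0)-m_k(\alpha_k\bar s^k)}$; $\Delta_{k+1}=r_1\Delta_k$ if $\rho^2_k<\eta_1$, $=\min\{\Delta_{\max},r_2\Delta_k\}$ if $\rho^2_k>\eta_2$, $=\Delta_k$ otherwise; $\tilde x^k=x^k+\alpha_k\bar s^k$ if $\rho^2_k\ge\eta$ and $\tilde x^k=x^k$ otherwise. Truncation step: set $\tilde x=\tilde x^k$ and repeat {find $i$ with $\tilde x\in S_i\setminus S_{i+1}$; if $\Gamma(\tilde x)<\epsilon_{c_i}$ set $\tilde x\leftarrow T(\tilde x,\epsilon_{c_i})$, $c_i\leftarrow c_i+1$; else stop}; $x^{k+1}=\tilde x$. *)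

theory Defs
  imports "HOL-Analysis.Analysis"
begin

definition C1_on :: "real set \<Rightarrow> (real \<Rightarrow> real) \<Rightarrow> bool" where
  "C1_on S h \<longleftrightarrow> (\<exists>h'. (\<forall>t\<in>S. (h has_real_derivative h' t) (at t)) \<and> continuous_on S h')"

definition dir_deriv :: "('a::real_normed_vector \<Rightarrow> real) \<Rightarrow> 'a \<Rightarrow> 'a \<Rightarrow> real" where
  "dir_deriv \<psi> x d = Lim (at_right 0) (\<lambda>t. (\<psi> (x + t *\<^sub>R d) - \<psi> x) / t)"

definition subdiff :: "('a::real_inner \<Rightarrow> real) \<Rightarrow> 'a \<Rightarrow> 'a set" where
  "subdiff \<phi> x = {v. \<forall>y. \<phi> x + v \<bullet> (y - x) \<le> \<phi> y}"

definition stationary :: "('a::real_inner \<Rightarrow> 'a) \<Rightarrow> ('a \<Rightarrow> real) \<Rightarrow> 'a \<Rightarrow> bool" where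
  "stationary gradf \<phi> x \<longleftrightarrow> 0 \<in> {gradf x + v | v. v \<in> subdiff \<phi> x}"

text \<open>Pseudo-gradient g(x) = u(x) d(x).\<close>
definition pseudo_gradient ::
  "('a::real_inner \<Rightarrow> real) \<Rightarrow> ('a \<Rightarrow> 'a) \<Rightarrow> ('a \<Rightarrow> real) \<Rightarrow> ('a \<Rightarrow> real) \<Rightarrow> ('a \<Rightarrow> 'a) \<Rightarrow> bool" where
  "pseudo_gradient \<psi> gradf \<phi> u d \<longleftrightarrow>
     (\<forall>x. (\<not> stationary gradf \<phi> x \<longrightarrow>
             norm (d x) = 1 \<and> dir_deriv \<psi> x (d x) < 0 \<and>
             dir_deriv \<psi> x (d x) \<le> u x \<and> u x < 0) \<and>
          (stationary gradf \<phi> x \<longrightarrow> d x = 0 \<and> u x = 0))"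

definition Gamma_max :: "('a::real_normed_vector \<Rightarrow> real) \<Rightarrow> 'a \<Rightarrow> 'a \<Rightarrow> ereal" where
  "Gamma_max \<psi> x d = Sup {ereal T | T. T > 0 \<and> C1_on {0<..<T} (\<lambda>t. \<psi> (x + t *\<^sub>R d))}"

definition Gamma :: "('a::real_normed_vector \<Rightarrow> real) \<Rightarrow> 'a \<Rightarrow> ereal" where
  "Gamma \<psi> x = (INF d \<in> {d. norm d = 1}. Gamma_max \<psi> x d)"

text \<open>S_0 ... S_m nested, S_{m+1} = empty (only S 0 .. S m are used).\<close>
definition truncatable ::
  "('a::real_normed_vector \<Rightarrow> real) \<Rightarrow> (nat \<Rightarrow> 'a set) \<Rightarrow> nat \<Rightarrow> ereal \<Rightarrow> real \<Rightarrow> ('a \<Rightarrow> real \<Rightarrow> 'a) \<Rightarrow> bool" where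
  "truncatable \<psi> S m \<delta> \<kappa> T \<longleftrightarrow>
     S 0 = UNIV \<and> (\<forall>i<m. S (Suc i) \<subseteq> S i) \<and> \<delta> > 0 \<and> \<kappa> > 0 \<and>
     (\<forall>x\<in>S m. Gamma \<psi> x \<ge> \<delta>) \<and>
     (\<forall>a i x. 0 < a \<and> ereal a \<le> \<delta> \<and> i < m \<and> x \<in> S i \<and> x \<notin> S (Suc i) \<longrightarrow>
        (Gamma \<psi> x \<ge> ereal a \<longrightarrow> T x a = x) \<and>
        (Gamma \<psi> x < ereal a \<longrightarrow>
           T x a \<in> S (Suc i) \<and> Gamma \<psi> (T x a) \<ge> ereal a \<and> norm (T x a - x) \<le> \<kappa> * a))"

text \<open>x lies in S_i minus S_{i+1} (with S_{m+1} empty).\<close>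
definition level :: "(nat \<Rightarrow> 'a set) \<Rightarrow> nat \<Rightarrow> 'a \<Rightarrow> nat \<Rightarrow> bool" where
  "level S m x i \<longleftrightarrow> i \<le> m \<and> x \<in> S i \<and> (i < m \<longrightarrow> x \<notin> S (Suc i))"

text \<open>The truncation loop: truncation x c y c' means that started at x with counters c,
  the loop terminates at y with counters c'.\<close>
inductive truncation for \<psi> :: "'a::real_normed_vector \<Rightarrow> real" and S m
    and \<epsilon> :: "nat \<Rightarrow> real" and T :: "'a \<Rightarrow> real \<Rightarrow> 'a" where
  stop: "level S m x i \<Longrightarrow> \<not> (Gamma \<psi> x < ereal (\<epsilon> (c i))) \<Longrightarrow> truncation \<psi> S m \<epsilon> T x c x c"
| trunc: "level S m x i \<Longrightarrow> Gamma \<psi> x < ereal (\<epsilon> (c i)) \<Longrightarrow>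
          truncation \<psi> S m \<epsilon> T (T x (\<epsilon> (c i))) (c(i := Suc (c i))) y c' \<Longrightarrow>
          truncation \<psi> S m \<epsilon> T x c y c'"

text \<open>Given x^k, Delta_k and the pseudo-gradient g, the iteration produces tilde x^k and
  Delta_{k+1}; the choices of B^k, alpha^C_k and s^k are existentially quantified.
  Unit vector bar v = v/|v| is sgn v.\<close>
definition tr_iteration ::
  "('a::euclidean_space \<Rightarrow> real) \<Rightarrow> ('a \<Rightarrow> 'a) \<Rightarrow> ('a \<Rightarrow> 'a \<Rightarrow> ereal) \<Rightarrow>
   real \<Rightarrow> real \<Rightarrow> real \<Rightarrow> real \<Rightarrow> real \<Rightarrow> real \<Rightarrow> real \<Rightarrow> real \<Rightarrow> (real \<Rightarrow> real) \<Rightarrow>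
   'a \<Rightarrow> real \<Rightarrow> 'a \<Rightarrow> real \<Rightarrow> bool" where
  "tr_iteration \<psi> g Gs \<eta> \<eta>1 \<eta>2 r1 r2 \<Delta>max \<gamma>1 \<gamma>2 lf xk \<Delta>k xt \<Delta>' \<longleftrightarrow>
    (\<exists>B \<alpha>C s. linear B \<and>
      (let gk = g xk;
           mk = (\<lambda>v. \<psi> xk + gk \<bullet> v + 1/2 * (v \<bullet> B v));
           sC = - (\<alpha>C *\<^sub>R gk)
       in 0 \<le> \<alpha>C \<and> \<alpha>C \<le> \<Delta>k / norm gk \<and>
          (\<forall>t. 0 \<le> t \<and> t \<le> \<Delta>k / norm gk \<longrightarrow> mk sC \<le> mk (- (t *\<^sub>R gk))) \<and>
          norm s \<le> \<Delta>k \<and>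
          mk 0 - mk s \<ge> \<gamma>1 / 2 * norm gk * min \<Delta>k (\<gamma>2 * norm gk) \<and>
          mk 0 - mk s \<ge> (1 - lf (norm s)) * (mk 0 - mk sC) \<and>
          (let \<rho>1 = (\<psi> xk - \<psi> (xk + s)) / (mk 0 - mk s)
           in if \<rho>1 \<ge> \<eta>1 then
                xt = xk + s \<and> \<Delta>' = (if \<rho>1 > \<eta>2 then min \<Delta>max (r2 * \<Delta>k) else \<Delta>k)
              else
                (let \<alpha>0 = real_of_ereal (min (Gs xk (sgn s)) (ereal (norm s)));
                     useC = (mk 0 - mk (\<alpha>0 *\<^sub>R sgn s) < \<alpha>0 / (2 * norm s) * (mk 0 - mk s));
                     s' = (if useC then sC else s);
                     \<alpha> = (if useC then real_of_ereal (min (Gs xk (sgn sC)) (ereal (norm sC))) else \<alpha>0);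
                     \<rho>2 = (\<psi> xk - \<psi> (xk + \<alpha> *\<^sub>R sgn s')) / (mk 0 - mk (\<alpha> *\<^sub>R sgn s'))
                 in \<Delta>' = (if \<rho>2 < \<eta>1 then r1 * \<Delta>k
                          else if \<rho>2 > \<eta>2 then min \<Delta>max (r2 * \<Delta>k) else \<Delta>k) \<and>
                    xt = (if \<rho>2 \<ge> \<eta> then xk + \<alpha> *\<^sub>R sgn s' else xk)))))"

text \<open>x k = x^k, xt k = tilde x^k, D k = Delta_k, c k = counter vector at the start of
  iteration k. When g(x^k) = 0 the algorithm stops; we encode this by keeping all
  quantities constant from then on (so xt k = x k = x (k+1)).\<close>
definition alg_run ::
  "('a::euclidean_space \<Rightarrow> real) \<Rightarrow> ('a \<Rightarrow> 'a) \<Rightarrow> ('a \<Rightarrow> 'a \<Rightarrow> ereal) \<Rightarrow>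
   (nat \<Rightarrow> 'a set) \<Rightarrow> nat \<Rightarrow> ('a \<Rightarrow> real \<Rightarrow> 'a) \<Rightarrow> (nat \<Rightarrow> real) \<Rightarrow>
   real \<Rightarrow> real \<Rightarrow> real \<Rightarrow> real \<Rightarrow> real \<Rightarrow> real \<Rightarrow> real \<Rightarrow> real \<Rightarrow> (real \<Rightarrow> real) \<Rightarrow>
   'a \<Rightarrow> real \<Rightarrow>
   (nat \<Rightarrow> 'a) \<Rightarrow> (nat \<Rightarrow> 'a) \<Rightarrow> (nat \<Rightarrow> real) \<Rightarrow> (nat \<Rightarrow> nat \<Rightarrow> nat) \<Rightarrow> bool" where
  "alg_run \<psi> g Gs S m T \<epsilon> \<eta> \<eta>1 \<eta>2 r1 r2 \<Delta>max \<gamma>1 \<gamma>2 lf x0 \<Delta>0 x xt D c \<longleftrightarrow>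
     x 0 = x0 \<and> D 0 = \<Delta>0 \<and> c 0 = (\<lambda>_. 0) \<and>
     (\<forall>k. (g (x k) = 0 \<longrightarrow>
             xt k = x k \<and> x (Suc k) = x k \<and> D (Suc k) = D k \<and> c (Suc k) = c k) \<and>
          (g (x k) \<noteq> 0 \<longrightarrow>
             tr_iteration \<psi> g Gs \<eta> \<eta>1 \<eta>2 r1 r2 \<Delta>max \<gamma>1 \<gamma>2 lf (x k) (D k) (xt k) (D (Suc k)) \<and>
             truncation \<psi> S m \<epsilon> T (xt k) (c k) (x (Suc k)) (c (Suc k))))"

end

theory Submission
  imports Defs
begin

lemma f_lip:
  fixes f :: "'a::euclidean_space \<Rightarrow> real" and gradf :: "'a \<Rightarrow> 'a"
  assumes "\<forall>y. (f has_derivative (\<lambda>h. gradf y \<bullet> h)) (at y)" "continuous_on UNIV gradf"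
  shows "\<exists>L\<ge>0. \<forall>a\<in>cball 0 r. \<forall>b\<in>cball 0 r. \<bar>f a - f b\<bar> \<le> L * norm (a - b)"
proof -
  have "bounded (gradf ` cball 0 r)"
    by (rule compact_imp_bounded, rule compact_continuous_image,
        rule continuous_on_subset[OF assms(2)], auto)
  then obtain Bd where Bd: "\<forall>y\<in>cball 0 r. norm (gradf y) \<le> Bd"
    unfolding bounded_iff by auto
  define L where "L = max 0 Bd"
  have "\<forall>a\<in>cball 0 r. \<forall>b\<in>cball 0 r. norm (f a - f b) \<le> L * norm (a - b)"
  proof (intro ballI)
    fix a b assume a: "a \<in> cball (0::'a) r" and b: "b \<in> cball (0::'a) r"
    show "norm (f a - f b) \<le> L * norm (a - b)"
    proof (rule differentiable_bound[where S="cball 0 r" and f'="\<lambda>y h. gradf y \<bullet> h"])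
      show "convex (cball (0::'a) r)" by simp
      show "(f has_derivative (\<lambda>h. gradf x \<bullet> h)) (at x within cball 0 r)" for x
        using assms(1) has_derivative_at_withinI by blast
      show "onorm (\<lambda>h. gradf x \<bullet> h) \<le> L" if "x \<in> cball 0 r" for x
      proof (rule onorm_le)
        fix h
        have "norm (gradf x \<bullet> h) \<le> norm (gradf x) * norm h"
          using norm_cauchy_schwarz by (simp add: Cauchy_Schwarz_ineq2)
        also have "\<dots> \<le> L * norm h"
        proof -
          have "norm (gradf x) \<le> Bd" using Bd that by blast
          then show ?thesis unfolding L_def by (intro mult_right_mono) auto
        qed
        finally show "norm (gradf x \<bullet> h) \<le> L * norm h" .
      qed
    qed (use a b in auto)
  qed
  then show ?thesis unfolding L_def by (intro exI[of _ "max 0 Bd"]) auto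
qed

lemma phi_lip:
  fixes \<phi> :: "'a::euclidean_space \<Rightarrow> real"
  assumes cv: "convex_on UNIV \<phi>"
  shows "\<exists>L\<ge>0. \<forall>a\<in>cball 0 r. \<forall>b\<in>cball 0 r. \<bar>\<phi> a - \<phi> b\<bar> \<le> L * norm (a - b)"
proof -
  have cont: "continuous_on UNIV \<phi>"
    using convex_on_continuous[OF open_UNIV cv] .
  have "bounded (\<phi> ` cball 0 (r+1))"
    by (rule compact_imp_bounded, rule compact_continuous_image,
        rule continuous_on_subset[OF cont], auto)
  then obtain M where M: "\<forall>y\<in>cball 0 (r+1). \<bar>\<phi> y\<bar> \<le> M"
    unfolding bounded_iff by auto
  have one: "\<phi> b - \<phi> a \<le> 2 * max 0 M * norm (b - a)"
    if a: "a \<in> cball 0 r" and b: "b \<in> cball 0 r" for a b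
  proof (cases "a = b")
    case True then show ?thesis by simp
  next
    case False
    define t where "t = norm (b - a)"
    have t: "t > 0" using False unfolding t_def by simp
    define z where "z = b + (1/t) *\<^sub>R (b - a)"
    have "norm z \<le> norm b + norm ((1/t) *\<^sub>R (b - a))"
      unfolding z_def by (rule norm_triangle_ineq)
    also have "norm ((1/t) *\<^sub>R (b - a)) = 1" using t unfolding t_def by simp
    finally have z: "z \<in> cball 0 (r+1)" using b by simp
    define l where "l = t / (1 + t)"
    have l: "0 \<le> l" "l \<le> 1" using t unfolding l_def by auto
    have beq: "b = (1 - l) *\<^sub>R a + l *\<^sub>R z"
    proof -
      have "(1 - l) *\<^sub>R a + l *\<^sub>R z = a + l *\<^sub>R (z - a)" by (simp add: algebra_simps)
      also have "z - a = ((1 + t)/t) *\<^sub>R (b - a)"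
      proof -
        have "z - a = (1 + 1/t) *\<^sub>R (b - a)" unfolding z_def by (simp add: algebra_simps)
        also have "1 + 1/t = (1+t)/t" using t by (simp add: field_simps)
        finally show ?thesis .
      qed
      also have "l *\<^sub>R (((1 + t)/t) *\<^sub>R (b - a)) = b - a"
        unfolding l_def using t by simp
      finally show ?thesis by simp
    qed
    have "\<phi> b \<le> (1 - l) * \<phi> a + l * \<phi> z"
      unfolding beq using cv l by (intro convex_onD) auto
    hence "\<phi> b - \<phi> a \<le> l * (\<phi> z - \<phi> a)" by (simp add: algebra_simps)
    also have "\<phi> z - \<phi> a \<le> 2 * max 0 M"
      using M z a by (smt (verit) mem_cball_0 max.cobounded2)
    hence "l * (\<phi> z - \<phi> a) \<le> l * (2 * max 0 M)" using l by (intro mult_left_mono) auto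
    also have "l \<le> t" unfolding l_def using t by (simp add: field_simps)
    hence "l * (2 * max 0 M) \<le> t * (2 * max 0 M)" by (intro mult_right_mono) auto
    finally show ?thesis unfolding t_def by (simp add: mult.commute)
  qed
  show ?thesis
  proof (intro exI[of _ "2 * max 0 M"] conjI ballI)
    fix a b assume "a \<in> cball (0::'a) r" "b \<in> cball (0::'a) r"
    then show "\<bar>\<phi> a - \<phi> b\<bar> \<le> 2 * max 0 M * norm (a - b)"
      using one[of a b] one[of b a] by (simp add: norm_minus_commute abs_le_iff)
  qed auto
qed


definition Phi :: "(nat \<Rightarrow> real) \<Rightarrow> nat \<Rightarrow> (nat \<Rightarrow> nat) \<Rightarrow> real" where
  "Phi \<epsilon> m c = (\<Sum>i<m. \<Sum>j<c i. \<epsilon> j)"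

lemma Phi_upd:
  assumes "i < m"
  shows "Phi \<epsilon> m (c(i := Suc (c i))) = Phi \<epsilon> m c + \<epsilon> (c i)"
proof -
  have "Phi \<epsilon> m (c(i := Suc (c i))) = (\<Sum>j<m. (\<Sum>l<c j. \<epsilon> l) + (if j = i then \<epsilon> (c i) else 0))"
    unfolding Phi_def by (intro sum.cong) auto
  also have "\<dots> = Phi \<epsilon> m c + \<epsilon> (c i)"
    unfolding Phi_def sum.distrib using assms by simp
  finally show ?thesis .
qed

lemma Phi_bound:
  assumes "\<forall>s. \<epsilon> s > 0" "summable \<epsilon>"
  shows "Phi \<epsilon> m c \<le> real m * (\<Sum>i. \<epsilon> i)"
proof -
  have "Phi \<epsilon> m c \<le> (\<Sum>i<m. (\<Sum>i. \<epsilon> i))"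
    unfolding Phi_def
    by (intro sum_mono sum_le_suminf) (use assms in \<open>auto intro: less_imp_le\<close>)
  then show ?thesis by simp
qed

lemma trunc_bound:
  assumes "truncation \<psi> S m \<epsilon> T x c y c'"
    and tr: "truncatable \<psi> S m \<delta> \<kappa> T"
    and eps: "\<forall>s. \<epsilon> s > 0" "\<forall>s. ereal (\<epsilon> s) \<le> \<delta>"
  shows "norm (y - x) \<le> \<kappa> * (Phi \<epsilon> m c' - Phi \<epsilon> m c)"
  using assms(1)
proof (induction rule: truncation.induct)
  case (stop x i c)
  then show ?case by simp
next
  case (trunc x i c y c')
  have im: "i < m"
  proof (rule ccontr)
    assume "\<not> i < m"
    hence "i = m" "x \<in> S m" using trunc(1) unfolding level_def by auto
    hence "Gamma \<psi> x \<ge> \<delta>" using tr unfolding truncatable_def by auto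
    hence "Gamma \<psi> x \<ge> ereal (\<epsilon> (c i))" using eps(2) order_trans by blast
    thus False using trunc(2) by simp
  qed
  have xl: "x \<in> S i" "x \<notin> S (Suc i)" using trunc(1) im unfolding level_def by auto
  have "norm (T x (\<epsilon> (c i)) - x) \<le> \<kappa> * \<epsilon> (c i)"
    using tr xl im eps trunc(2) unfolding truncatable_def by blast
  moreover have "\<kappa> * (Phi \<epsilon> m c' - Phi \<epsilon> m (c(i := Suc (c i)))) = \<kappa> * (Phi \<epsilon> m c' - Phi \<epsilon> m c) - \<kappa> * \<epsilon> (c i)"
    unfolding Phi_upd[OF im] by (simp add: algebra_simps)
  moreover have "norm (y - x) \<le> norm (y - T x (\<epsilon> (c i))) + norm (T x (\<epsilon> (c i)) - x)"
    using norm_triangle_ineq[of "y - T x (\<epsilon> (c i))" "T x (\<epsilon> (c i)) - x"] by simp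
  ultimately show ?case using trunc.IH by linarith
qed

theorem lemma4p7:
  fixes f \<phi> \<psi> :: "'a::euclidean_space \<Rightarrow> real"
    and gradf :: "'a \<Rightarrow> 'a"
    and u :: "'a \<Rightarrow> real" and d :: "'a \<Rightarrow> 'a"
    and Gs :: "'a \<Rightarrow> 'a \<Rightarrow> ereal"
    and S :: "nat \<Rightarrow> 'a set" and m :: nat and \<delta> :: ereal and \<kappa> :: real
    and T :: "'a \<Rightarrow> real \<Rightarrow> 'a"
    and \<eta> \<eta>1 \<eta>2 r1 r2 \<Delta>max \<gamma>1 \<gamma>2 \<Delta>0 :: real
    and \<epsilon> :: "nat \<Rightarrow> real" and lf :: "real \<Rightarrow> real"
    and x0 :: 'a
    and x xt :: "nat \<Rightarrow> 'a" and D :: "nat \<Rightarrow> real" and c :: "nat \<Rightarrow> nat \<Rightarrow> nat"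
  assumes f_C1: "\<forall>y. (f has_derivative (\<lambda>h. gradf y \<bullet> h)) (at y)" "continuous_on UNIV gradf"
    and \<phi>_convex: "convex_on UNIV \<phi>"
    and \<psi>_def: "\<forall>y. \<psi> y = f y + \<phi> y"
    and pg: "pseudo_gradient \<psi> gradf \<phi> u d"
    and Gs_pos: "\<forall>y e. Gs y e > 0"
    and trunc: "truncatable \<psi> S m \<delta> \<kappa> T"
    and params: "0 < \<eta>" "\<eta> < \<eta>1" "\<eta>1 < \<eta>2" "\<eta>2 < 1" "0 < r1" "r1 < 1" "1 < r2"
                "\<Delta>max > 0" "\<gamma>1 > 0" "\<gamma>2 > 0" "\<Delta>0 > 0"
    and eps: "\<forall>s. \<epsilon> s > 0" "\<forall>s. \<epsilon> (Suc s) < \<epsilon> s" "summable \<epsilon>" "\<forall>s. ereal (\<epsilon> s) \<le> \<delta>"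
    and ell: "\<forall>a b. 0 < a \<and> a \<le> b \<longrightarrow> lf b \<le> lf a"
             "\<forall>t>0. 0 \<le> lf t \<and> lf t \<le> 1/2" "(lf \<longlongrightarrow> 0) (at_right 0)"
    and run: "alg_run \<psi> (\<lambda>y. u y *\<^sub>R d y) Gs S m T \<epsilon> \<eta> \<eta>1 \<eta>2 r1 r2 \<Delta>max \<gamma>1 \<gamma>2 lf x0 \<Delta>0
                x xt D c"
    and bounded: "\<exists>R>0. \<forall>k. x k \<in> ball 0 R"
  shows "summable (\<lambda>k. norm (x (Suc k) - xt k)) \<and>
         (\<Sum>k. norm (x (Suc k) - xt k)) \<le> real m * \<kappa> * (\<Sum>i. \<epsilon> i) \<and>
         summable \<epsilon> \<and>
         summable (\<lambda>k. \<bar>\<psi> (x (Suc k)) - \<psi> (xt k)\<bar>)"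
proof -
  have kpos: "\<kappa> > 0" using trunc unfolding truncatable_def by auto
  define P where "P = (\<lambda>k. Phi \<epsilon> m (c k))"
  have step: "norm (x (Suc k) - xt k) \<le> \<kappa> * (P (Suc k) - P k)" for k
  proof (cases "u (x k) *\<^sub>R d (x k) = 0")
    case True
    then show ?thesis using run unfolding alg_run_def P_def by auto
  next
    case False
    then have "truncation \<psi> S m \<epsilon> T (xt k) (c k) (x (Suc k)) (c (Suc k))"
      using run unfolding alg_run_def by auto
    from trunc_bound[OF this trunc eps(1) eps(4)] show ?thesis unfolding P_def .
  qed
  have P0: "P 0 = 0" using run unfolding alg_run_def P_def Phi_def by simp
  define B where "B = real m * \<kappa> * (\<Sum>i. \<epsilon> i)"
  have Pb: "\<kappa> * P n \<le> B" for n
    using Phi_bound[OF eps(1) eps(3), of m "c n"] kpos unfolding P_def B_def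
    by (simp add: mult.assoc mult.left_commute)
  have Pnn: "0 \<le> P n" for n
    unfolding P_def Phi_def using eps(1) by (intro sum_nonneg) (auto intro: less_imp_le)
  have partial: "(\<Sum>k<n. norm (x (Suc k) - xt k)) \<le> B" for n
  proof -
    have "(\<Sum>k<n. norm (x (Suc k) - xt k)) \<le> (\<Sum>k<n. \<kappa> * (P (Suc k) - P k))"
      by (intro sum_mono step)
    also have "\<dots> = \<kappa> * (P n - P 0)"
      by (simp add: sum_distrib_left[symmetric] sum_lessThan_telescope)
    also have "\<dots> \<le> B" using Pb[of n] P0 by simp
    finally show ?thesis .
  qed
  have summ: "summable (\<lambda>k. norm (x (Suc k) - xt k))"
    by (rule summableI_nonneg_bounded[OF _ partial]) simp
  have sumle: "(\<Sum>k. norm (x (Suc k) - xt k)) \<le> B"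
    by (rule suminf_le_const[OF summ partial])
  have each: "norm (x (Suc k) - xt k) \<le> B" for k
  proof -
    have "0 \<le> \<kappa> * P k" using Pnn[of k] kpos by simp
    then show ?thesis using step[of k] Pb[of "Suc k"] by (simp add: right_diff_distrib)
  qed
  obtain R where R: "R > 0" "\<forall>k. x k \<in> ball 0 R" using bounded by auto
  define r where "r = R + B"
  have inx: "x (Suc k) \<in> cball 0 r" for k
  proof -
    have "0 \<le> B" using each[of k] norm_ge_zero[of "x (Suc k) - xt k"] by linarith
    moreover have "norm (x (Suc k)) < R" using R(2) by simp
    ultimately show ?thesis unfolding r_def by simp
  qed
  have inxt: "xt k \<in> cball 0 r" for k
  proof -
    have "norm (xt k) \<le> norm (x (Suc k)) + norm (x (Suc k) - xt k)"
      using norm_triangle_ineq4[of "x (Suc k)" "x (Suc k) - xt k"] by simp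
    moreover have "norm (x (Suc k)) < R" using R(2) by simp
    ultimately show ?thesis using each[of k] unfolding r_def by simp
  qed
  obtain L1 where L1: "L1 \<ge> 0" "\<forall>a\<in>cball 0 r. \<forall>b\<in>cball 0 r. \<bar>f a - f b\<bar> \<le> L1 * norm (a - b)"
    using f_lip[OF f_C1] by blast
  obtain L2 where L2: "L2 \<ge> 0" "\<forall>a\<in>cball 0 r. \<forall>b\<in>cball 0 r. \<bar>\<phi> a - \<phi> b\<bar> \<le> L2 * norm (a - b)"
    using phi_lip[OF \<phi>_convex] by blast
  have lip: "\<bar>\<psi> (x (Suc k)) - \<psi> (xt k)\<bar> \<le> (L1 + L2) * norm (x (Suc k) - xt k)" for k
  proof -
    have "\<bar>\<psi> (x (Suc k)) - \<psi> (xt k)\<bar> \<le> \<bar>f (x (Suc k)) - f (xt k)\<bar> + \<bar>\<phi> (x (Suc k)) - \<phi> (xt k)\<bar>"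
      using \<psi>_def by simp
    also have "\<dots> \<le> L1 * norm (x (Suc k) - xt k) + L2 * norm (x (Suc k) - xt k)"
      using L1(2) L2(2) inx[of k] inxt[of k] by (intro add_mono) auto
    finally show ?thesis by (simp add: algebra_simps)
  qed
  have summ2: "summable (\<lambda>k. \<bar>\<psi> (x (Suc k)) - \<psi> (xt k)\<bar>)"
    by (rule summable_comparison_test[OF _ summable_mult[OF summ, of "L1 + L2"]])
       (use lip in auto)
  show ?thesis using summ sumle summ2 eps(3) unfolding B_def by auto
qed

end
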